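(* Let $d\in\{2,3\}$, $\kappa>0$, and let $\mathcal{X}\subset\mathbb{R}^d$ be a connected bounded open set. Let $a=(a_1,a_2)\in(\mathbb{C}\setminus\{0\})^2$ and $x=(x_1,x_2)\in\mathcal{X}^2$, and define $\alpha=\kappa^2|G(x_1,x_2)|\sqrt{|a_1||a_2|}$. If $\alpha<1$, then $$\sup_{(\hat{x},\theta)\in\mathbb{S}^{d-1}\times\mathbb{S}^{d-1}}|u^{\infty}(\hat x,\theta)-u^{\infty,b}(\hat x,\theta)|\leq \frac{\kappa^2}{4\pi}\,\frac{2\alpha}{1-\alpha^2}\Big(\alpha\frac{|a_1|+|a_2|}{2}+\sqrt{|a_1||a_2|}\Big).$$
   Context: $G$ is the Green function of the Helmholtz equation with wavenumber $\kappa$: $G(x,y)=\frac{i}{4}H_0^{(1)}(\kappa|x-y|)$ if $d=2$ (with $H_0^{(1)}$ the Hankel function of the first kind and order zero) and $G(x,y)=\frac{e^{i\kappa|x-y|}}{4\pi|x-y|}$ if $d=3$. For $s$ scatterers with intensities $a\in(\mathbb{C}\setminus\{0\})^s$ and pairwise distinct locations $x\in\mathcal{X}^s$, and an incident direction $\theta\in\mathbb{S}^{d-1}$, let $u^{\mathrm{in}}(y)=e^{i\kappa\theta\cdot y}$ and let $u=(u_i)_{1\le i\le s}$ be the solution of the Foldy–Lax system $u_i=u^{\mathrm{in}}(x_i)+\kappa^2\sum_{j\neq i}G(x_i,x_j)a_ju_j$, $i=1,\dots,s$. The far field pattern is $u^{\infty}(\hat x,\theta)=\frac{\kappa^2}{4\pi}\sum_{i=1}^s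 a_iu_ie^{-i\kappa\hat x\cdot x_i}$ and its Born approximation is $u^{\infty,b}(\hat x,\theta)=\frac{\kappa^2}{4\pi}\sum_{i=1}^s a_ie^{-i\kappa(\hat x-\theta)\cdot x_i}$, for $(\hat x,\theta)\in\mathbb{S}^{d-1}\times\mathbb{S}^{d-1}$. Here $s=2$. *)

theory Defs
  imports "HOL-Analysis.Analysis"
begin

text \<open>Bessel functions of order zero on the positive real axis, via their
standard power series (Abramowitz--Stegun 9.1.10 and 9.1.13).\<close>

definition bessel_J0 :: "real \<Rightarrow> real" where
  "bessel_J0 t = (\<Sum>k. (-1) ^ k * (t / 2) ^ (2 * k) / (fact k) ^ 2)"

definition bessel_Y0 :: "real \<Rightarrow> real" where
  "bessel_Y0 t = (2 / pi) * ((ln (t / 2) + euler_mascheroni) * bessel_J0 t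
      + (\<Sum>k. (-1) ^ (k + 1) * harm k * (t / 2) ^ (2 * k) / (fact k) ^ 2))"

definition hankel1_0 :: "real \<Rightarrow> complex" where
  "hankel1_0 t = complex_of_real (bessel_J0 t) + \<i> * complex_of_real (bessel_Y0 t)"

definition green :: "real \<Rightarrow> real ^ 'n \<Rightarrow> real ^ 'n \<Rightarrow> complex" where
  "green \<kappa> x y =
     (if CARD('n) = 2 then (\<i> / 4) * hankel1_0 (\<kappa> * dist x y)
      else exp (\<i> * complex_of_real (\<kappa> * dist x y)) / complex_of_real (4 * pi * dist x y))"

definition u_in :: "real \<Rightarrow> real ^ 'n \<Rightarrow> real ^ 'n \<Rightarrow> complex" where
  "u_in \<kappa> \<theta> y = exp (\<i> * complex_of_real (\<kappa> * (\<theta> \<bullet> y)))"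

definition foldy_lax_solution ::
  "real \<Rightarrow> nat \<Rightarrow> (nat \<Rightarrow> complex) \<Rightarrow> (nat \<Rightarrow> real ^ 'n) \<Rightarrow> real ^ 'n \<Rightarrow> (nat \<Rightarrow> complex) \<Rightarrow> bool" where
  "foldy_lax_solution \<kappa> s a x \<theta> u \<longleftrightarrow>
     (\<forall>i<s. u i = u_in \<kappa> \<theta> (x i)
        + complex_of_real (\<kappa>\<^sup>2) * (\<Sum>j\<in>{..<s} - {i}. green \<kappa> (x i) (x j) * a j * u j))"

definition far_field ::
  "real \<Rightarrow> nat \<Rightarrow> (nat \<Rightarrow> complex) \<Rightarrow> (nat \<Rightarrow> real ^ 'n) \<Rightarrow> (nat \<Rightarrow> complex) \<Rightarrow> real ^ 'n \<Rightarrow> complex" where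
  "far_field \<kappa> s a x u xh =
     complex_of_real (\<kappa>\<^sup>2 / (4 * pi)) *
       (\<Sum>i<s. a i * u i * exp (- \<i> * complex_of_real (\<kappa> * (xh \<bullet> x i))))"

definition born_far_field ::
  "real \<Rightarrow> nat \<Rightarrow> (nat \<Rightarrow> complex) \<Rightarrow> (nat \<Rightarrow> real ^ 'n) \<Rightarrow> real ^ 'n \<Rightarrow> real ^ 'n \<Rightarrow> complex" where
  "born_far_field \<kappa> s a x xh \<theta> =
     complex_of_real (\<kappa>\<^sup>2 / (4 * pi)) *
       (\<Sum>i<s. a i * exp (- \<i> * complex_of_real (\<kappa> * ((xh - \<theta>) \<bullet> x i))))"

end

theory Submission
  imports Defs
begin

lemma key_bound:
  fixes G a0 a1 e0 e1 u0 u1 :: complex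
  assumes e0: "cmod e0 = 1" and e1: "cmod e1 = 1"
    and h0: "u0 = e0 + G * a1 * u1" and h1: "u1 = e1 + G * a0 * u0"
    and al: "cmod G * sqrt (cmod a0 * cmod a1) < 1"
  shows "cmod a0 * cmod (u0 - e0) + cmod a1 * cmod (u1 - e1)
     \<le> (2 * (cmod G * sqrt (cmod a0 * cmod a1)) / (1 - (cmod G * sqrt (cmod a0 * cmod a1))\<^sup>2))
        * ((cmod G * sqrt (cmod a0 * cmod a1)) * (cmod a0 + cmod a1) / 2 + sqrt (cmod a0 * cmod a1))"
proof -
  define s where "s = sqrt (cmod a0 * cmod a1)"
  define \<beta> where "\<beta> = cmod G"
  define D where "D = G\<^sup>2 * a0 * a1"
  have s2: "s\<^sup>2 = cmod a0 * cmod a1" unfolding s_def by simp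
  have s0: "s \<ge> 0" unfolding s_def by simp
  have b0: "\<beta> \<ge> 0" unfolding \<beta>_def by simp
  have cD: "cmod D = (\<beta> * s)\<^sup>2" unfolding D_def \<beta>_def
    by (simp add: norm_mult norm_power power_mult_distrib s2)
  have al': "\<beta> * s < 1" using al unfolding \<beta>_def s_def .
  have as0: "(\<beta> * s)\<^sup>2 < 1" using al' b0 s0
    by (metis abs_of_nonneg mult_nonneg_nonneg one_power2 power_strict_mono zero_le_numeral zero_less_numeral less_numeral_extra(4) power2_less_imp_less abs_square_less_1)
  have den: "1 - (\<beta> * s)\<^sup>2 \<le> cmod (1 - D)"
    using norm_triangle_ineq2[of 1 D] cD by simp
  have denpos: "0 < 1 - (\<beta> * s)\<^sup>2" using as0 by simp
  have F0: "u0 - e0 = G * a1 * e1 + D * u0"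
  proof -
    have "u0 - e0 = G * a1 * u1" using h0 by simp
    also have "\<dots> = G * a1 * (e1 + G * a0 * u0)" by (subst h1) (rule refl)
    finally have "u0 - e0 = G * a1 * (e1 + G * a0 * u0)" .
    then show ?thesis unfolding D_def by (simp add: algebra_simps power2_eq_square)
  qed
  have F1: "u1 - e1 = G * a0 * e0 + D * u1"
  proof -
    have "u1 - e1 = G * a0 * u0" using h1 by simp
    also have "\<dots> = G * a0 * (e0 + G * a1 * u1)" by (subst h0) (rule refl)
    finally have "u1 - e1 = G * a0 * (e0 + G * a1 * u1)" .
    then show ?thesis unfolding D_def by (simp add: algebra_simps power2_eq_square)
  qed
  have E0: "(1 - D) * (u0 - e0) = G * a1 * e1 + D * e0"
    using F0 by (simp add: algebra_simps)
  have E1: "(1 - D) * (u1 - e1) = G * a0 * e0 + D * e1"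
    using F1 by (simp add: algebra_simps)
  have B0: "cmod (u0 - e0) * (1 - (\<beta> * s)\<^sup>2) \<le> \<beta> * cmod a1 + (\<beta> * s)\<^sup>2"
  proof -
    have "cmod (u0 - e0) * (1 - (\<beta> * s)\<^sup>2) \<le> cmod (u0 - e0) * cmod (1 - D)"
      by (rule mult_left_mono[OF den]) simp
    also have "\<dots> = cmod (G * a1 * e1 + D * e0)" using E0
      by (metis mult.commute norm_mult)
    also have "\<dots> \<le> cmod (G * a1 * e1) + cmod (D * e0)" by (rule norm_triangle_ineq)
    also have "\<dots> = \<beta> * cmod a1 + (\<beta> * s)\<^sup>2" using e0 e1 cD
      by (simp add: norm_mult \<beta>_def)
    finally show ?thesis .
  qed
  have B1: "cmod (u1 - e1) * (1 - (\<beta> * s)\<^sup>2) \<le> \<beta> * cmod a0 + (\<beta> * s)\<^sup>2"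
  proof -
    have "cmod (u1 - e1) * (1 - (\<beta> * s)\<^sup>2) \<le> cmod (u1 - e1) * cmod (1 - D)"
      by (rule mult_left_mono[OF den]) simp
    also have "\<dots> = cmod (G * a0 * e0 + D * e1)" using E1
      by (metis mult.commute norm_mult)
    also have "\<dots> \<le> cmod (G * a0 * e0) + cmod (D * e1)" by (rule norm_triangle_ineq)
    also have "\<dots> = \<beta> * cmod a0 + (\<beta> * s)\<^sup>2" using e0 e1 cD
      by (simp add: norm_mult \<beta>_def)
    finally show ?thesis .
  qed
  have "(cmod a0 * cmod (u0 - e0) + cmod a1 * cmod (u1 - e1)) * (1 - (\<beta> * s)\<^sup>2)
      = cmod a0 * (cmod (u0 - e0) * (1 - (\<beta> * s)\<^sup>2)) + cmod a1 * (cmod (u1 - e1) * (1 - (\<beta> * s)\<^sup>2))"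
    by (simp add: algebra_simps)
  also have "\<dots> \<le> cmod a0 * (\<beta> * cmod a1 + (\<beta> * s)\<^sup>2) + cmod a1 * (\<beta> * cmod a0 + (\<beta> * s)\<^sup>2)"
    by (intro add_mono mult_left_mono B0 B1) auto
  also have "\<dots> = 2 * \<beta> * (cmod a0 * cmod a1) + \<beta>\<^sup>2 * s\<^sup>2 * (cmod a0 + cmod a1)"
    by (simp add: algebra_simps power2_eq_square)
  also have "\<dots> = 2 * \<beta> * s\<^sup>2 + \<beta>\<^sup>2 * s\<^sup>2 * (cmod a0 + cmod a1)"
    by (simp only: s2)
  also have "\<dots> = 2 * (\<beta> * s) * ((\<beta> * s) * (cmod a0 + cmod a1) / 2 + s)"
    by (simp add: algebra_simps power2_eq_square)
  finally have "(cmod a0 * cmod (u0 - e0) + cmod a1 * cmod (u1 - e1))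
     \<le> 2 * (\<beta> * s) * ((\<beta> * s) * (cmod a0 + cmod a1) / 2 + s) / (1 - (\<beta> * s)\<^sup>2)"
    using denpos by (simp add: pos_le_divide_eq)
  then show ?thesis unfolding s_def \<beta>_def by (simp add: field_simps)
qed

theorem proposition1:
  fixes \<kappa> :: real and X :: "(real ^ 'n) set"
    and a :: "nat \<Rightarrow> complex" and x :: "nat \<Rightarrow> real ^ 'n"
  assumes dim: "CARD('n) = 2 \<or> CARD('n) = 3"
    and kappa: "\<kappa> > 0"
    and X: "connected X" "bounded X" "open X"
    and a: "a 0 \<noteq> 0" "a 1 \<noteq> 0"
    and x: "x 0 \<in> X" "x 1 \<in> X" "x 0 \<noteq> x 1"
    and alpha: "\<kappa>\<^sup>2 * cmod (green \<kappa> (x 0) (x 1)) * sqrt (cmod (a 0) * cmod (a 1)) < 1"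
  shows "\<forall>xh \<in> sphere 0 1. \<forall>\<theta> \<in> sphere 0 1. \<forall>u. foldy_lax_solution \<kappa> 2 a x \<theta> u \<longrightarrow>
     (let \<alpha> = \<kappa>\<^sup>2 * cmod (green \<kappa> (x 0) (x 1)) * sqrt (cmod (a 0) * cmod (a 1)) in
      cmod (far_field \<kappa> 2 a x u xh - born_far_field \<kappa> 2 a x xh \<theta>)
        \<le> \<kappa>\<^sup>2 / (4 * pi) * (2 * \<alpha> / (1 - \<alpha>\<^sup>2))
           * (\<alpha> * (cmod (a 0) + cmod (a 1)) / 2 + sqrt (cmod (a 0) * cmod (a 1))))"
proof (intro ballI allI impI)
  fix xh \<theta> :: "real ^ 'n" and u
  assume FL: "foldy_lax_solution \<kappa> 2 a x \<theta> u"
  define G where "G = complex_of_real (\<kappa>\<^sup>2) * green \<kappa> (x 0) (x 1)"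
  have sym: "green \<kappa> (x 1) (x 0) = green \<kappa> (x 0) (x 1)"
    unfolding green_def by (simp add: dist_commute)
  have sym': "green \<kappa> (x (Suc 0)) (x 0) = green \<kappa> (x 0) (x (Suc 0))"
    unfolding green_def by (simp add: dist_commute)
  have s0: "{..<2::nat} - {0} = {1}" by auto
  have s1: "{..<2::nat} - {1} = {0}" by auto
  define e where "e i = u_in \<kappa> \<theta> (x i)" for i
  define f where "f i = exp (- \<i> * complex_of_real (\<kappa> * (xh \<bullet> x i)))" for i
  have FL0: "u 0 = u_in \<kappa> \<theta> (x 0)
        + complex_of_real (\<kappa>\<^sup>2) * (\<Sum>j\<in>{..<2} - {0}. green \<kappa> (x 0) (x j) * a j * u j)"
    using FL unfolding foldy_lax_solution_def by simp
  have FL1: "u 1 = u_in \<kappa> \<theta> (x 1)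
        + complex_of_real (\<kappa>\<^sup>2) * (\<Sum>j\<in>{..<2} - {1}. green \<kappa> (x 1) (x j) * a j * u j)"
    using FL unfolding foldy_lax_solution_def by simp
  have h0: "u 0 = e 0 + G * a 1 * u 1"
    using FL0 unfolding e_def G_def s0 by (simp add: algebra_simps)
  have h1: "u 1 = e 1 + G * a 0 * u 0"
    using FL1 unfolding e_def G_def s1 by (simp add: algebra_simps sym sym')
  have ne: "cmod (e i) = 1" for i unfolding e_def u_in_def
    by (simp add: norm_exp_i_times)
  have nf: "cmod (f i) = 1" for i
  proof -
    have "f i = exp (\<i> * complex_of_real (- (\<kappa> * (xh \<bullet> x i))))"
      unfolding f_def by simp
    then show ?thesis by (simp only: norm_exp_i_times)
  qed
  have bexp: "exp (- \<i> * complex_of_real (\<kappa> * ((xh - \<theta>) \<bullet> x i))) = f i * e i" for i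
    unfolding f_def e_def u_in_def
    by (simp add: inner_diff_left algebra_simps exp_add[symmetric])
  have cG: "cmod G = \<kappa>\<^sup>2 * cmod (green \<kappa> (x 0) (x 1))"
    unfolding G_def by (simp add: norm_mult norm_power)
  have diff: "far_field \<kappa> 2 a x u xh - born_far_field \<kappa> 2 a x xh \<theta>
     = complex_of_real (\<kappa>\<^sup>2 / (4 * pi)) * (a 0 * (u 0 - e 0) * f 0 + a 1 * (u 1 - e 1) * f 1)"
    unfolding far_field_def born_far_field_def bexp
    by (simp add: numeral_2_eq_2 f_def algebra_simps)
  have "cmod (a 0 * (u 0 - e 0) * f 0 + a 1 * (u 1 - e 1) * f 1)
      \<le> cmod (a 0) * cmod (u 0 - e 0) + cmod (a 1) * cmod (u 1 - e 1)"
    using norm_triangle_ineq[of "a 0 * (u 0 - e 0) * f 0" "a 1 * (u 1 - e 1) * f 1"]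
    by (simp add: norm_mult nf)
  also have "\<dots> \<le> (2 * (cmod G * sqrt (cmod (a 0) * cmod (a 1))) / (1 - (cmod G * sqrt (cmod (a 0) * cmod (a 1)))\<^sup>2))
        * ((cmod G * sqrt (cmod (a 0) * cmod (a 1))) * (cmod (a 0) + cmod (a 1)) / 2 + sqrt (cmod (a 0) * cmod (a 1)))"
    by (rule key_bound[OF ne ne h0 h1]) (use alpha cG in simp)
  finally have main: "cmod (a 0 * (u 0 - e 0) * f 0 + a 1 * (u 1 - e 1) * f 1)
      \<le> (2 * (cmod G * sqrt (cmod (a 0) * cmod (a 1))) / (1 - (cmod G * sqrt (cmod (a 0) * cmod (a 1)))\<^sup>2))
        * ((cmod G * sqrt (cmod (a 0) * cmod (a 1))) * (cmod (a 0) + cmod (a 1)) / 2 + sqrt (cmod (a 0) * cmod (a 1)))" .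
  have c0: "0 \<le> \<kappa>\<^sup>2 / (4 * pi)" by simp
  have cc: "cmod (complex_of_real (\<kappa>\<^sup>2 / (4 * pi))) = \<kappa>\<^sup>2 / (4 * pi)"
    using c0 by (simp only: norm_of_real abs_of_nonneg)
  show "let \<alpha> = \<kappa>\<^sup>2 * cmod (green \<kappa> (x 0) (x 1)) * sqrt (cmod (a 0) * cmod (a 1)) in
      cmod (far_field \<kappa> 2 a x u xh - born_far_field \<kappa> 2 a x xh \<theta>)
        \<le> \<kappa>\<^sup>2 / (4 * pi) * (2 * \<alpha> / (1 - \<alpha>\<^sup>2))
           * (\<alpha> * (cmod (a 0) + cmod (a 1)) / 2 + sqrt (cmod (a 0) * cmod (a 1)))"
    unfolding Let_def diff norm_mult cc
    using mult_left_mono[OF main c0] cG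
    by (simp add: mult.assoc)
qed

end
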